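(* Let $n\ge1$ and let $\mathfrak{c}=\{c_{ij}\}_{1\le i<j\le n}$, $\mathfrak{\ell}=\{\ell_1,\dots,\ell_n\}$ be integers. If the Grossberg–Karshon twisted cube $(C(\mathfrak{c},\mathfrak{\ell}),\rho)$ is untwisted, then $\ell_i\ge0$ for all $1\le i\le n$.
   Context: $A_n(x)=\ell_n$, $A_j(x)=\ell_j-\sum_{k=j+1}^nc_{jk}x_k$ for $1\le j\le n-1$. $C(\mathfrak{c},\mathfrak{\ell})=\{x\in\mathbb{R}^n:$ for each $1\le k\le n$, $A_k(x)<x_k<0$ or $0\le x_k\le A_k(x)\}$; $\rho(x)=(-1)^n\prod_k\mathrm{sgn}(x_k)$ on $C(\mathfrak{c},\mathfrak{\ell})$, $0$ elsewhere ($\mathrm{sgn}(t)=1$ for $t<0$, $-1$ for $t\ge0$). The twisted cube is untwisted if $C(\mathfrak{c},\mathfrak{\ell})$ is closed in $\mathbb{R}^n$ (equivalently, $C(\mathfrak{c},\mathfrak{\ell})=\{x:0\le x_j\le A_j(x)\ \forall j\}$). *)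

theory Defs
  imports "HOL-Analysis.Analysis"
begin

text \<open>Points of R^n are represented as functions nat => real that vanish outside
  the index range {1..n}; nat => real carries the product topology, and the
  subspace of functions vanishing outside {1..n} is closed and homeomorphic to R^n.\<close>

definition gk_A :: "(nat \<Rightarrow> nat \<Rightarrow> int) \<Rightarrow> (nat \<Rightarrow> int) \<Rightarrow> nat \<Rightarrow> nat \<Rightarrow> (nat \<Rightarrow> real) \<Rightarrow> real" where
  "gk_A c l n j x = real_of_int (l j) - (\<Sum>k\<in>{j+1..n}. real_of_int (c j k) * x k)"

definition gk_C :: "(nat \<Rightarrow> nat \<Rightarrow> int) \<Rightarrow> (nat \<Rightarrow> int) \<Rightarrow> nat \<Rightarrow> (nat \<Rightarrow> real) set" where
  "gk_C c l n = {x. (\<forall>k. k \<notin> {1..n} \<longrightarrow> x k = 0) \<and>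
      (\<forall>k\<in>{1..n}. (gk_A c l n k x < x k \<and> x k < 0) \<or> (0 \<le> x k \<and> x k \<le> gk_A c l n k x))}"

definition gk_untwisted :: "(nat \<Rightarrow> nat \<Rightarrow> int) \<Rightarrow> (nat \<Rightarrow> int) \<Rightarrow> nat \<Rightarrow> bool" where
  "gk_untwisted c l n \<longleftrightarrow> closed (gk_C c l n)"

end

theory Submission
  imports Defs
begin

primrec gkF :: "(nat \<Rightarrow> nat \<Rightarrow> int) \<Rightarrow> (nat \<Rightarrow> int) \<Rightarrow> nat \<Rightarrow> nat \<Rightarrow> real \<Rightarrow> nat \<Rightarrow> (nat \<Rightarrow> real)" where
  "gkF c l n i s 0 = (\<lambda>k. if k = i then s else 0)"
| "gkF c l n i s (Suc d) = (let v = gkF c l n i s d in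
      if Suc d < i then v(i - Suc d := min (gk_A c l n (i - Suc d) v) 0 / 2) else v)"

lemma gkA_local:
  assumes "\<And>k. k > j \<Longrightarrow> x k = y k"
  shows "gk_A c l n j x = gk_A c l n j y"
  unfolding gk_A_def using assms by (intro arg_cong2[where f="(-)"] refl sum.cong) auto

lemma gkF_zero: "k \<noteq> i \<Longrightarrow> k > i \<or> k = 0 \<Longrightarrow> gkF c l n i s d k = 0"
  by (induction d) (auto simp: Let_def)

lemma gkF_stable: "k \<ge> i - d \<Longrightarrow> gkF c l n i s (d + e) k = gkF c l n i s d k"
  by (induction e) (auto simp: Let_def)

lemma gkF_top: "gkF c l n i s d i = s"
  by (induction d) (auto simp: Let_def)

lemma gkF_low:
  assumes "1 \<le> j" "j < i"
  shows "gkF c l n i s (i - 1) j = min (gk_A c l n j (gkF c l n i s (i - 1))) 0 / 2"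
proof -
  define d where "d = i - Suc j"
  have jd: "j = i - Suc d" "Suc d < i" using assms by (auto simp: d_def)
  have e: "i - 1 = Suc d + (i - 1 - Suc d)" using jd by auto
  have v: "gkF c l n i s (Suc d) j = min (gk_A c l n j (gkF c l n i s d)) 0 / 2"
    using jd by (simp add: Let_def)
  have A1: "gk_A c l n j (gkF c l n i s d) = gk_A c l n j (gkF c l n i s (Suc d))"
    by (rule gkA_local) (use jd in \<open>auto simp: Let_def\<close>)
  have A2: "gk_A c l n j (gkF c l n i s (Suc d)) = gk_A c l n j (gkF c l n i s (i - 1))"
    apply (rule gkA_local)
    apply (subst e)
    apply (rule gkF_stable[symmetric])
    using jd by auto
  have "gkF c l n i s (i - 1) j = gkF c l n i s (Suc d) j"
    apply (subst e) apply (rule gkF_stable) using jd by auto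
  then show ?thesis using v A1 A2 by simp
qed

lemma gkF_cont: "continuous_on UNIV (\<lambda>s. gkF c l n i s d k)"
proof (induction d arbitrary: k)
  case 0
  then show ?case by (cases "k = i") (auto intro!: continuous_intros)
next
  case (Suc d)
  have cA: "continuous_on UNIV (\<lambda>s. gk_A c l n j (gkF c l n i s d))" for j
    unfolding gk_A_def by (intro continuous_intros Suc.IH)
  show ?case
  proof (cases "Suc d < i \<and> k = i - Suc d")
    case True
    then show ?thesis by (simp add: Let_def, intro continuous_intros cA, simp)
  next
    case False
    then have "(\<lambda>s. gkF c l n i s (Suc d) k) = (\<lambda>s. gkF c l n i s d k)"
      by (auto simp: Let_def)
    then show ?thesis using Suc.IH by metis
  qed
qed

theorem lemma3p1:
  fixes c :: "nat \<Rightarrow> nat \<Rightarrow> int" and l :: "nat \<Rightarrow> int" and n :: nat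
  assumes "n \<ge> 1"
    and "gk_untwisted c l n"
  shows "\<forall>i\<in>{1..n}. l i \<ge> 0"
proof (rule ccontr)
  assume neg: "\<not> (\<forall>i\<in>{1..n}. l i \<ge> 0)"
  define I where "I = {i\<in>{1..n}. l i < 0}"
  have IN: "I \<noteq> {}" "finite I" using neg by (auto simp: I_def)
  define i where "i = Max I"
  have iI: "i \<in> I" using IN by (simp add: i_def)
  have i1: "1 \<le> i" "i \<le> n" "l i < 0" using iI by (auto simp: I_def)
  have above: "l k \<ge> 0" if "i < k" "k \<le> n" for k
  proof (rule ccontr)
    assume "\<not> l k \<ge> 0"
    then have "k \<in> I" using that i1 by (auto simp: I_def)
    then show False using Max_ge[OF IN(2), of k] that by (simp add: i_def)
  qed
  define P where "P s = gkF c l n i s (i - 1)" for s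
  have Pz: "P s k = 0" if "k > i \<or> k = 0" for s k proof - have "k \<noteq> i" using that i1 by auto then show ?thesis using gkF_zero that by (simp add: P_def) qed
  have Pi: "P s i = s" for s by (simp add: P_def gkF_top)
  have Ahigh: "gk_A c l n k (P s) = l k" if "k \<ge> i" for s k
    unfolding gk_A_def using Pz that by simp
  have cont: "continuous_on UNIV P"
    unfolding P_def by (intro continuous_on_coordinatewise_then_product gkF_cont)
  define S where "S = P -` gk_C c l n"
  have clS: "closed S"
    unfolding S_def
    apply (rule continuous_closed_vimage)
    using assms(2) apply (simp add: gk_untwisted_def)
    using cont continuous_on_eq_continuous_at by blast
  have sub: "{real_of_int (l i)<..<0} \<subseteq> S"
  proof
    fix s assume s: "s \<in> {real_of_int (l i)<..<0}"
    have "P s \<in> gk_C c l n"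
      unfolding gk_C_def
    proof (intro CollectI conjI allI impI ballI)
      fix k assume "k \<notin> {1..n}"
      then show "P s k = 0" using Pz i1 by auto
    next
      fix k assume k: "k \<in> {1..n}"
      consider "k < i" | "k = i" | "k > i" by linarith
      then show "gk_A c l n k (P s) < P s k \<and> P s k < 0 \<or> 0 \<le> P s k \<and> P s k \<le> gk_A c l n k (P s)"
      proof cases
        case 1
        have "P s k = min (gk_A c l n k (P s)) 0 / 2"
          unfolding P_def using gkF_low[of k i] 1 k by auto
        then show ?thesis by (cases "gk_A c l n k (P s) < 0") auto
      next
        case 2
        then show ?thesis using Pi Ahigh[of i s] s by auto
      next
        case 3
        then show ?thesis using Pz Ahigh[of k s] above[of k] k by auto
      qed
    qed
    then show "s \<in> S" by (simp add: S_def)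
  qed
  have "closure {real_of_int (l i)<..<0} \<subseteq> S"
    using closure_minimal[OF sub clS] .
  moreover have "(0::real) \<in> closure {real_of_int (l i)<..<0}" using i1 by simp
  ultimately have "0 \<in> S" by blast
  then have "P 0 \<in> gk_C c l n" by (simp add: S_def)
  then have "gk_A c l n i (P 0) < P 0 i \<and> P 0 i < 0 \<or> 0 \<le> P 0 i \<and> P 0 i \<le> gk_A c l n i (P 0)"
    using i1 unfolding gk_C_def by auto
  then show False using Pi Ahigh[of i 0] i1 by simp
qed

end
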